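(* Let $p\in(0,1)$ and let $B\ge 1$ be an integer. For $q\in(0,1]$ define $r_B(q)$ by: if $B=1$, $r_1(q)=\frac{p}{p+q-pq}$; if $B>1$ and $q\neq p$, $$r_B(q)=\frac{\frac{p}{q}\Big(1-\big(\frac{p(1-q)}{q(1-p)}\big)^B\Big)}{1-\frac{p}{q}\big(\frac{p(1-q)}{q(1-p)}\big)^B},$$ and if $B>1$ and $q=p$, $r_B(p)=\frac{B}{B+1-p}$. Let $f_B(q)=q\,r_B(q)$ for $q\in(0,1]$ and $f_B(0)=0$. Then $f_B$ is an increasing function of $q$ on $[0,1]$.
   Context: Interpretation: $r_B(q)$ is the stationary probability that the battery (of capacity $B$ energy units) of a transmitter is nonempty, when one unit of energy arrives per slot with probability $p$ (i.i.d. Bernoulli) and, whenever the battery is nonempty, one unit is spent for a transmission with probability $q$. Then $f_B(q)$ is the probability that the transmitter transmits in a given slot. *)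

theory Defs
  imports Complex_Main
begin

text \<open>Stationary probability that the battery (capacity B) is nonempty,
  energy arrival probability p, transmission probability q (for q in (0,1]).\<close>
definition r_B :: "real \<Rightarrow> nat \<Rightarrow> real \<Rightarrow> real" where
  "r_B p B q =
     (if B = 1 then p / (p + q - p * q)
      else if q \<noteq> p then
        (p / q * (1 - (p * (1 - q) / (q * (1 - p))) ^ B)) /
        (1 - p / q * (p * (1 - q) / (q * (1 - p))) ^ B)
      else real B / (real B + 1 - p))"

definition f_B :: "real \<Rightarrow> nat \<Rightarrow> real \<Rightarrow> real" where
  "f_B p B q = (if q = 0 then 0 else q * r_B p B q)"

end

theory Submission
  imports Defs
begin

fun Qf :: "nat \<Rightarrow> real \<Rightarrow> real" where
  "Qf 0 y = 0" | "Qf (Suc n) y = 1 + y * Qf n y"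

lemma Qf_ge1: "y \<ge> 0 \<Longrightarrow> n \<ge> 1 \<Longrightarrow> Qf n y \<ge> 1"
proof (induction n)
  case 0 then show ?case by simp
next
  case (Suc n)
  show ?case
  proof (cases "n = 0")
    case True then show ?thesis by simp
  next
    case False
    then have "Qf n y \<ge> 1" using Suc by simp
    then show ?thesis using Suc.prems by simp
  qed
qed

lemma Qf_nonneg: "y \<ge> 0 \<Longrightarrow> Qf n y \<ge> 0"
  by (induction n) auto

lemma Qf_Suc': "Qf (Suc n) y = Qf n y + y ^ n"
proof (induction n)
  case 0 then show ?case by simp
next
  case (Suc n)
  have "Qf (Suc (Suc n)) y = 1 + y * Qf (Suc n) y" by simp
  also have "\<dots> = 1 + y * (Qf n y + y ^ n)" by (subst Suc.IH) (rule refl)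
  also have "\<dots> = (1 + y * Qf n y) + y ^ Suc n" by (simp add: algebra_simps)
  finally show ?case by simp
qed

lemma Qf_geom: "(1 - y) * Qf n y = 1 - y ^ n"
proof (induction n)
  case 0 then show ?case by simp
next
  case (Suc n)
  have "(1 - y) * Qf (Suc n) y = (1 - y) + y * ((1 - y) * Qf n y)" by (simp add: algebra_simps)
  also have "\<dots> = (1 - y) + y * (1 - y ^ n)" by (subst Suc.IH) (rule refl)
  finally show ?case by (simp add: algebra_simps)
qed

lemma Qf_one: "Qf n 1 = real n"
  by (induction n) auto

lemma Qf_key:
  assumes "0 \<le> b" "b < a" "n \<ge> 1"
  shows "Qf n a - Qf n b < (a - b) * Qf n a * Qf n b"
  using assms(3)
proof (induction n)
  case 0 then show ?case by simp
next
  case (Suc n)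
  show ?case
  proof (cases "n = 0")
    case True then show ?thesis using assms by simp
  next
    case False
    then have IH: "Qf n a - Qf n b < (a - b) * Qf n a * Qf n b" using Suc by simp
    have a0: "a > 0" using assms by simp
    have "Qf (Suc n) a - Qf (Suc n) b = (a - b) * Qf n a + b * (Qf n a - Qf n b)"
      by (simp add: algebra_simps)
    also have "\<dots> \<le> (a - b) * Qf n a + b * ((a - b) * Qf n a * Qf n b)"
      using IH assms by (intro add_left_mono mult_left_mono) auto
    also have "\<dots> = (a - b) * Qf n a * Qf (Suc n) b" by (simp add: algebra_simps)
    also have "\<dots> < (a - b) * Qf (Suc n) a * Qf (Suc n) b"
    proof -
      have "Qf n a < Qf (Suc n) a" using a0 by (simp only: Qf_Suc') simp
      moreover have "(a - b) * Qf (Suc n) b > 0"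
        using assms Qf_ge1[of b "Suc n"] by simp
      ultimately have "Qf n a * ((a - b) * Qf (Suc n) b) < Qf (Suc n) a * ((a - b) * Qf (Suc n) b)"
        by (rule mult_strict_right_mono)
      then show ?thesis by (simp only: ac_simps)
    qed
    finally show ?thesis .
  qed
qed

lemma h_mono:
  assumes "0 \<le> b" "b < a" "n \<ge> 1"
  shows "b + 1 / Qf n b < a + 1 / Qf n a"
proof -
  have qa: "Qf n a \<ge> 1" and qb: "Qf n b \<ge> 1" using Qf_ge1 assms by auto
  have "Qf n a - Qf n b < (a - b) * Qf n a * Qf n b" using Qf_key assms by blast
  then have "(Qf n a - Qf n b) / (Qf n a * Qf n b) < a - b"
    using qa qb by (simp add: divide_simps mult.assoc)
  moreover have "(Qf n a - Qf n b) / (Qf n a * Qf n b) = 1 / Qf n b - 1 / Qf n a"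
    using qa qb by (simp add: divide_simps)
  ultimately show ?thesis by simp
qed

lemma f_form:
  assumes p: "0 < p" "p < 1" and B: "B \<ge> 1" and q: "0 < q" "q \<le> 1"
  defines "y \<equiv> p * (1 - q) / (q * (1 - p))"
  shows "f_B p B q = 1 / (1 + (1 - p) / p * (y + 1 / Qf B y))"
proof -
  have pq: "1 - p > 0" "q * (1 - p) > 0" using p q by auto
  have yq: "q * (1 - p) * y = p * (1 - q)" unfolding y_def using pq q by simp
  have y0: "y \<ge> 0" using p q unfolding y_def by simp
  have Q1: "Qf B y \<ge> 1" using Qf_ge1 y0 B by auto
  have qy: "1 / q = 1 + (1 - p) / p * y"
  proof -
    have "p * (1 + (1 - p) / p * y) = p + (1 - p) * y" using p by (simp add: field_simps)
    also have "\<dots> = p / q" using yq q by (simp add: field_simps)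
    finally have "1 + (1 - p) / p * y = (p / q) / p" using p
      by (metis nonzero_mult_div_cancel_left less_irrefl)
    then show ?thesis using p by simp
  qed
  have D: "p * Qf B y + q * (1 - p) > 0" using p q Q1 pq by (simp add: add_pos_pos)
  have R: "1 / (1 + (1 - p) / p * (y + 1 / Qf B y)) = p * q * Qf B y / (p * Qf B y + q * (1 - p))"
  proof -
    have "1 + (1 - p) / p * (y + 1 / Qf B y) = 1 / q + (1 - p) / p * (1 / Qf B y)"
      using qy by (simp add: algebra_simps)
    also have "\<dots> = (p * Qf B y + q * (1 - p)) / (p * q * Qf B y)"
      using p q Q1 by (simp add: field_simps)
    finally show ?thesis by simp
  qed
  show ?thesis
  proof (cases "B = 1")
    case True
    have e: "p + q - p * q = p + q * (1 - p)" by (simp add: algebra_simps)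
    have "f_B p B q = q * (p / (p + q - p * q))"
      using True q unfolding f_B_def r_B_def by simp
    also have "\<dots> = p * q / (p * Qf B y + q * (1 - p))"
      unfolding e using True by simp
    finally have "f_B p B q = p * q / (p * Qf B y + q * (1 - p))" .
    then show ?thesis unfolding R using True by simp
  next
    case False
    show ?thesis
    proof (cases "q = p")
      case True
      then have "y = 1" unfolding y_def using p by simp
      then have "Qf B y = real B" by (simp add: Qf_one)
      moreover have "f_B p B q = q * (real B / (real B + 1 - p))"
        using True False q unfolding f_B_def r_B_def by simp
      moreover have "p * q * Qf B y / (p * Qf B y + q * (1 - p)) = p * (p * B) / (p * (B + 1 - p))"
        using True \<open>Qf B y = real B\<close> by (simp add: algebra_simps)
      moreover have "p * (p * B) / (p * (B + 1 - p)) = q * (real B / (real B + 1 - p))"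
        using True p by simp
      ultimately show ?thesis unfolding R by simp
    next
      case qp: False
      have y1: "y \<noteq> 1"
      proof
        assume "y = 1"
        then have "p * (1 - q) = q * (1 - p)" using yq by simp
        then show False using qp by (simp add: algebra_simps)
      qed
      have g: "1 - y ^ B = (1 - y) * Qf B y" using Qf_geom by simp
      have ystar: "p * (1 - q) / (q * (1 - p)) = y" unfolding y_def ..
      have e1: "q - p * y ^ B = (1 - y) * (p * Qf B y + q * (1 - p))"
      proof -
        have "q - p * y ^ B = (q - p) + p * (1 - y ^ B)" by (simp add: algebra_simps)
        also have "q - p = q * (1 - p) - p * (1 - q)" by (simp add: algebra_simps)
        also have "\<dots> = q * (1 - p) * (1 - y)" using yq by (simp add: algebra_simps)
        finally show ?thesis unfolding g by (simp add: algebra_simps)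
      qed
      have ne: "1 - y \<noteq> 0" using y1 by simp
      have "f_B p B q = q * ((p / q * (1 - y ^ B)) / (1 - p / q * y ^ B))"
        using q False qp unfolding f_B_def r_B_def ystar by simp
      also have "\<dots> = p * q * (1 - y ^ B) / (q - p * y ^ B)"
      proof -
        have "1 - p / q * y ^ B = (q - p * y ^ B) / q" using q by (simp add: field_simps)
        then show ?thesis using q by simp
      qed
      also have "\<dots> = p * q * ((1 - y) * Qf B y) / ((1 - y) * (p * Qf B y + q * (1 - p)))"
        unfolding e1 g ..
      also have "\<dots> = p * q * Qf B y / (p * Qf B y + q * (1 - p))"
        using ne by simp
      finally show ?thesis unfolding R .
    qed
  qed
qed

theorem lemma1:
  fixes p :: real and B :: nat
  assumes "0 < p" and "p < 1" and "B \<ge> 1"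
  shows "strict_mono_on {0..1} (f_B p B)"
proof (rule strict_mono_onI)
  fix q1 q2 :: real assume q1: "q1 \<in> {0..1}" and q2: "q2 \<in> {0..1}" and lt: "q1 < q2"
  define y where "y = (\<lambda>q. p * (1 - q) / (q * (1 - p)))"
  define K where "K = (1 - p) / p"
  have K: "K > 0" using assms unfolding K_def by simp
  have pos: "f_B p B q > 0" if "0 < q" "q \<le> 1" for q
  proof -
    have "y q \<ge> 0" using that assms unfolding y_def by simp
    then have "1 + K * (y q + 1 / Qf B (y q)) > 0" using K Qf_ge1[of "y q" B] assms
      by (simp add: add_pos_nonneg)
    then show ?thesis using f_form[OF assms that] unfolding y_def K_def by simp
  qed
  show "f_B p B q1 < f_B p B q2"
  proof (cases "q1 = 0")
    case True
    then show ?thesis using pos[of q2] q2 lt unfolding f_B_def by simp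
  next
    case False
    then have q1p: "q1 > 0" using q1 by simp
    have yy: "y q2 < y q1"
    proof -
      have "(1 - q2) / q2 < (1 - q1) / q1" using q1p lt q2 by (simp add: field_simps)
      then have "p / (1 - p) * ((1 - q2) / q2) < p / (1 - p) * ((1 - q1) / q1)"
        using assms by (intro mult_strict_left_mono) auto
      then show ?thesis unfolding y_def by (simp add: field_simps)
    qed
    have y2: "y q2 \<ge> 0" using q2 lt q1p assms unfolding y_def by simp
    have h: "y q2 + 1 / Qf B (y q2) < y q1 + 1 / Qf B (y q1)"
      using h_mono[OF y2 yy assms(3)] .
    have Dp: "1 + K * (y q2 + 1 / Qf B (y q2)) > 0" using K Qf_ge1[of "y q2" B] assms y2
      by (simp add: add_pos_nonneg)
    have "1 + K * (y q2 + 1 / Qf B (y q2)) < 1 + K * (y q1 + 1 / Qf B (y q1))"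
      using h K by simp
    then have "1 / (1 + K * (y q1 + 1 / Qf B (y q1))) < 1 / (1 + K * (y q2 + 1 / Qf B (y q2)))"
      using Dp by (intro divide_strict_left_mono) auto
    then show ?thesis
      using f_form[OF assms q1p] f_form[OF assms, of q2] q1 q2 q1p lt
      unfolding y_def K_def by simp
  qed
qed

end
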